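(* Let $(X,\|\cdot\|)$ and $(Y,\|\cdot\|)$ be finite-dimensional normed vector spaces and let $T$ be a $Y$-multivalued map on $X$ with $T(u)\neq\varnothing$ for every $u\in X$ which is weakly continuous at every point of $X$. Then $\{x\in X:T(x)\text{ is a singleton}\}$ and $\mathrm{dmn}\,\mathrm{D}T$ are Borel subsets of $X$, and $\mathrm{D}T:\mathrm{dmn}\,\mathrm{D}T\to\mathrm{Hom}(X,Y)$ is a Borel function.
   Context: A $Y$-multivalued map $T$ on $X$ assigns to each $x\in X$ a subset $T(x)\subseteq Y$; if $T(x)$ is a singleton, $T(x)$ also denotes its unique element. $T$ is weakly continuous at $x$ if for every $\varepsilon>0$ there is $\delta>0$ such that $T(y)\subseteq T(x)+\{v\in Y:\|v\|<\varepsilon\}$ whenever $\|y-x\|<\delta$. $T$ is strongly differentiable at $x$ if $T(x)$ is a singleton and there is a linear map $L:X\to Y$ such that for every $\varepsilon>0$ there is $\delta>0$ with $\|w-T(x)-L(y-x)\|\le\varepsilon\|y-x\|$ whenever $\|x-y\|\le\delta$ and $w\in T(y)$; such $L$ is unique and denoted $\mathrm{D}T(x)$, and $\mathrm{dmn}\,\mathrm{D}T$ is the set of points where $T$ is strongly differentiable. *)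

theory Defs
  imports "HOL-Analysis.Analysis"
begin

text \<open>A Y-multivalued map on X is modelled as T :: 'a \<Rightarrow> 'b set.\<close>

definition weakly_continuous_at :: "('a::real_normed_vector \<Rightarrow> 'b::real_normed_vector set) \<Rightarrow> 'a \<Rightarrow> bool" where
  "weakly_continuous_at T x \<longleftrightarrow>
     (\<forall>\<epsilon>>0. \<exists>\<delta>>0. \<forall>y. norm (y - x) < \<delta> \<longrightarrow>
        T y \<subseteq> {a + v | a v. a \<in> T x \<and> norm v < \<epsilon>})"

definition strongly_diff_with :: "('a::real_normed_vector \<Rightarrow> 'b::real_normed_vector set) \<Rightarrow> 'a \<Rightarrow> ('a \<Rightarrow> 'b) \<Rightarrow> bool" where
  "strongly_diff_with T x L \<longleftrightarrow> is_singleton (T x) \<and> linear L \<and>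
     (\<forall>\<epsilon>>0. \<exists>\<delta>>0. \<forall>y w. norm (x - y) \<le> \<delta> \<and> w \<in> T y \<longrightarrow>
        norm (w - the_elem (T x) - L (y - x)) \<le> \<epsilon> * norm (y - x))"

definition dmn_D :: "('a::real_normed_vector \<Rightarrow> 'b::real_normed_vector set) \<Rightarrow> 'a set" where
  "dmn_D T = {x. \<exists>L. strongly_diff_with T x L}"

text \<open>The strong derivative, as an element of Hom(X,Y) (bounded = all linear maps in finite dimensions).\<close>
definition D :: "('a::real_normed_vector \<Rightarrow> 'b::real_normed_vector set) \<Rightarrow> 'a \<Rightarrow> ('a \<Rightarrow>\<^sub>L 'b)" where
  "D T x = (THE L. strongly_diff_with T x (blinfun_apply L))"

end

theory Submission
  imports Defs
begin

lemma fin_dim_coeffs: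
  fixes B :: "'a::real_normed_vector set"
  assumes "finite B"
  shows "closed (span B) \<and> (\<exists>K\<ge>0. \<forall>x\<in>span B. \<exists>c. x = (\<Sum>b\<in>B. c b *\<^sub>R b) \<and> (\<forall>b\<in>B. \<bar>c b\<bar> \<le> K * norm x))"
  using assms
proof (induction B rule: finite_induct)
  case empty
  then show ?case by auto
next
  case (insert a B)
  from insert.IH obtain K where K0: "K \<ge> 0" and K: "\<forall>x\<in>span B. \<exists>c. x = (\<Sum>b\<in>B. c b *\<^sub>R b) \<and> (\<forall>b\<in>B. \<bar>c b\<bar> \<le> K * norm x)"
    by blast
  have clB: "closed (span B)" using insert.IH by (rule conjunct1)
  show ?case
  proof (cases "a \<in> span B")
    case True
    then have eq: "span (insert a B) = span B"
      by (simp add: span_redundant)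
    have "\<forall>x\<in>span (insert a B). \<exists>c. x = (\<Sum>b\<in>insert a B. c b *\<^sub>R b) \<and> (\<forall>b\<in>insert a B. \<bar>c b\<bar> \<le> K * norm x)"
    proof
      fix x assume "x \<in> span (insert a B)"
      then obtain c where c: "x = (\<Sum>b\<in>B. c b *\<^sub>R b)" "\<forall>b\<in>B. \<bar>c b\<bar> \<le> K * norm x"
        using K eq by auto
      have s: "(\<Sum>b\<in>B. (c(a:=0)) b *\<^sub>R b) = (\<Sum>b\<in>B. c b *\<^sub>R b)"
        using insert.hyps by (intro sum.cong) auto
      show "\<exists>c. x = (\<Sum>b\<in>insert a B. c b *\<^sub>R b) \<and> (\<forall>b\<in>insert a B. \<bar>c b\<bar> \<le> K * norm x)"
        apply (rule exI[of _ "c(a:=0)"])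
        using insert.hyps c s K0 by auto
    qed
    then show ?thesis using clB eq K0 by auto
  next
    case False
    define d where "d = infdist a (span B)"
    have d0: "d > 0" unfolding d_def
      using infdist_pos_not_in_closed[OF clB _ False] span_zero by blast
    have tb: "\<bar>t\<bar> * d \<le> norm (y + t *\<^sub>R a)" if "y \<in> span B" for y t
    proof (cases "t = 0")
      case True then show ?thesis by simp
    next
      case False
      have "- (1/t) *\<^sub>R y \<in> span B" using that by (simp add: span_scale span_neg)
      then have "d \<le> dist a (- (1/t) *\<^sub>R y)" unfolding d_def by (rule infdist_le)
      also have "dist a (- (1/t) *\<^sub>R y) = norm ((1/t) *\<^sub>R (y + t *\<^sub>R a))"
        using False by (simp add: dist_norm algebra_simps)
      also have "\<dots> = norm (y + t *\<^sub>R a) / \<bar>t\<bar>" by simp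
      finally show ?thesis using False by (simp add: field_simps)
    qed
    have closed': "closed (span (insert a B))"
      unfolding closed_sequential_limits
    proof (intro allI impI, elim conjE)
      fix X l assume X: "\<forall>n. X n \<in> span (insert a B)" and Xl: "X \<longlonglongrightarrow> l"
      have "\<forall>n. \<exists>t. X n - t *\<^sub>R a \<in> span B" using X by (simp add: span_insert)
      then obtain t where t: "\<And>n. X n - t n *\<^sub>R a \<in> span B" by metis
      have "Cauchy X" using Xl by (rule LIMSEQ_imp_Cauchy)
      have "Cauchy t"
      proof (rule metric_CauchyI)
        fix e :: real assume "e > 0"
        with \<open>Cauchy X\<close> d0 obtain M where M: "\<And>m n. m \<ge> M \<Longrightarrow> n \<ge> M \<Longrightarrow> dist (X m) (X n) < e * d"
          by (meson metric_CauchyD mult_pos_pos)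
        show "\<exists>M. \<forall>m\<ge>M. \<forall>n\<ge>M. dist (t m) (t n) < e"
        proof (intro exI allI impI)
          fix m n assume mn: "m \<ge> M" "n \<ge> M"
          have "(X m - t m *\<^sub>R a) - (X n - t n *\<^sub>R a) \<in> span B" using t by (simp add: span_diff)
          from tb[OF this, of "t m - t n"]
          have "\<bar>t m - t n\<bar> * d \<le> norm (X m - X n)" by (simp add: algebra_simps)
          also have "\<dots> < e * d" using M[OF mn] by (simp add: dist_norm)
          finally show "dist (t m) (t n) < e" using d0 by (simp add: dist_real_def)
        qed
      qed
      then obtain \<tau> where "t \<longlonglongrightarrow> \<tau>" using Cauchy_convergent_iff convergent_def by blast
      then have "(\<lambda>n. X n - t n *\<^sub>R a) \<longlonglongrightarrow> l - \<tau> *\<^sub>R a"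
        using Xl by (intro tendsto_intros)
      then have "l - \<tau> *\<^sub>R a \<in> span B"
        using clB t unfolding closed_sequential_limits by (metis (no_types, lifting))
      then show "l \<in> span (insert a B)" by (auto simp: span_insert)
    qed
    define K' where "K' = max (K * (1 + norm a / d)) (1 / d)"
    have K'0: "K' \<ge> 0" unfolding K'_def using d0 by (simp add: max.coboundedI2)
    have "\<forall>x\<in>span (insert a B). \<exists>c. x = (\<Sum>b\<in>insert a B. c b *\<^sub>R b) \<and> (\<forall>b\<in>insert a B. \<bar>c b\<bar> \<le> K' * norm x)"
    proof
      fix x assume "x \<in> span (insert a B)"
      then obtain t where yB: "x - t *\<^sub>R a \<in> span B" by (auto simp: span_insert)
      define y where "y = x - t *\<^sub>R a"
      have xy: "x = y + t *\<^sub>R a" unfolding y_def by simp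
      have ht: "\<bar>t\<bar> * d \<le> norm x" using tb[of y t] yB unfolding y_def by simp
      then have ht': "\<bar>t\<bar> \<le> norm x / d" using d0 by (simp add: field_simps)
      have "norm y \<le> norm x + norm (t *\<^sub>R a)" unfolding y_def
        by (rule norm_triangle_ineq4)
      also have "norm x + norm (t *\<^sub>R a) = norm x + \<bar>t\<bar> * norm a" by simp
      also have "\<dots> \<le> norm x + norm x / d * norm a"
        using ht' by (intro add_left_mono mult_right_mono) auto
      also have "\<dots> = norm x * (1 + norm a / d)" by (simp add: algebra_simps)
      finally have ny: "norm y \<le> norm x * (1 + norm a / d)" .
      obtain c where c: "y = (\<Sum>b\<in>B. c b *\<^sub>R b)" "\<forall>b\<in>B. \<bar>c b\<bar> \<le> K * norm y"
        using K yB unfolding y_def by blast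
      have s: "(\<Sum>b\<in>B. (c(a:=t)) b *\<^sub>R b) = (\<Sum>b\<in>B. c b *\<^sub>R b)"
        using insert.hyps by (intro sum.cong) auto
      have bnd: "\<bar>c b\<bar> \<le> K' * norm x" if "b \<in> B" for b
      proof -
        have "\<bar>c b\<bar> \<le> K * norm y" using c that by blast
        also have "\<dots> \<le> K * (norm x * (1 + norm a / d))" using ny K0 by (rule mult_left_mono)
        also have "\<dots> = (K * (1 + norm a / d)) * norm x" by (simp add: algebra_simps)
        also have "\<dots> \<le> K' * norm x" unfolding K'_def
          by (intro mult_right_mono) auto
        finally show ?thesis .
      qed
      have bnda: "\<bar>t\<bar> \<le> K' * norm x"
      proof -
        have "norm x / d = (1/d) * norm x" by simp
        also have "\<dots> \<le> K' * norm x" unfolding K'_def by (intro mult_right_mono) auto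
        finally show ?thesis using ht' by linarith
      qed
      show "\<exists>c. x = (\<Sum>b\<in>insert a B. c b *\<^sub>R b) \<and> (\<forall>b\<in>insert a B. \<bar>c b\<bar> \<le> K' * norm x)"
        apply (rule exI[of _ "c(a:=t)"])
        using insert.hyps c s bnd bnda xy by (auto simp: add.commute)
    qed
    then show ?thesis using closed' K'0 by blast
  qed
qed


lemma fin_bounded_linear:
  fixes f :: "'a::real_normed_vector \<Rightarrow> 'b::real_normed_vector" and B :: "'a set"
  assumes "finite B" "span B = UNIV" "linear f"
  shows "bounded_linear f"
proof -
  obtain K where K0: "K \<ge> 0" and K: "\<forall>x. \<exists>c. x = (\<Sum>b\<in>B. c b *\<^sub>R b) \<and> (\<forall>b\<in>B. \<bar>c b\<bar> \<le> K * norm x)"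
    using fin_dim_coeffs[OF assms(1)] assms(2) by auto
  have "norm (f x) \<le> norm x * (K * (\<Sum>b\<in>B. norm (f b)))" for x :: 'a
  proof -
    obtain c where c: "x = (\<Sum>b\<in>B. c b *\<^sub>R b)" "\<forall>b\<in>B. \<bar>c b\<bar> \<le> K * norm x" using K by blast
    have "f x = (\<Sum>b\<in>B. c b *\<^sub>R f b)"
      unfolding c(1) using assms(3) by (simp add: linear_sum linear_scale)
    then have "norm (f x) \<le> (\<Sum>b\<in>B. norm (c b *\<^sub>R f b))" by (metis norm_sum)
    also have "\<dots> \<le> (\<Sum>b\<in>B. (K * norm x) * norm (f b))"
      using c(2) by (intro sum_mono) (simp add: mult_right_mono)
    also have "\<dots> = norm x * (K * (\<Sum>b\<in>B. norm (f b)))"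
      by (simp add: sum_distrib_left algebra_simps)
    finally show ?thesis .
  qed
  then show ?thesis using assms(3)
    by (intro bounded_linear_intro[of _ "K * (\<Sum>b\<in>B. norm (f b))"]) (auto simp: linear_add linear_scale)
qed

lemma fin_indep_basis:
  assumes "\<exists>B::'a::real_normed_vector set. finite B \<and> span B = UNIV"
  obtains BB :: "'a::real_normed_vector set" where "finite BB" "independent BB" "span BB = UNIV"
proof -
  obtain B :: "'a set" where B: "finite B" "span B = UNIV" using assms by blast
  obtain BB :: "'a set" where BB: "independent BB" "UNIV \<subseteq> span BB"
    using basis_exists[of UNIV] by blast
  have "finite BB" using independent_span_bound[OF B(1) BB(1)] B(2) by auto
  then show ?thesis using that BB by auto
qed

lemma fin_coord_bounded:
  fixes BB :: "'a::real_normed_vector set"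
  assumes "finite BB" "independent BB" "span BB = UNIV"
  shows "bounded_linear (\<lambda>v. representation BB v b)"
proof -
  have "Vector_Spaces.linear (*\<^sub>R) (*) (\<lambda>v. representation BB v b)"
    by (rule real_vector.linear_representation) (use assms in auto)
  then have "linear (\<lambda>v. representation BB v b)"
    unfolding linear_def real_scaleR_def [abs_def] .
  then show ?thesis using fin_bounded_linear assms by blast
qed

lemma fin_Cauchy_convergent:
  fixes X :: "nat \<Rightarrow> 'b::real_normed_vector"
  assumes "\<exists>B::'b set. finite B \<and> span B = UNIV" "Cauchy X"
  shows "convergent X"
proof -
  obtain BB :: "'b set" where BB: "finite BB" "independent BB" "span BB = UNIV"
    using fin_indep_basis[OF assms(1)] by blast
  have "\<forall>b. \<exists>r. (\<lambda>n. representation BB (X n) b) \<longlonglongrightarrow> r"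
  proof
    fix b
    interpret bl: bounded_linear "\<lambda>v. representation BB v b"
      using fin_coord_bounded[OF BB] .
    have "Cauchy (\<lambda>n. representation BB (X n) b)"
      using bl.Cauchy[OF assms(2)] .
    then show "\<exists>r. (\<lambda>n. representation BB (X n) b) \<longlonglongrightarrow> r"
      using Cauchy_convergent_iff convergent_def by blast
  qed
  then obtain r where r: "\<And>b. (\<lambda>n. representation BB (X n) b) \<longlonglongrightarrow> r b" by metis
  have eq: "X n = (\<Sum>b\<in>BB. representation BB (X n) b *\<^sub>R b)" for n
    using sum_representation_eq[of BB "X n" BB] BB by auto
  have "(\<lambda>n. (\<Sum>b\<in>BB. representation BB (X n) b *\<^sub>R b)) \<longlonglongrightarrow> (\<Sum>b\<in>BB. r b *\<^sub>R b)"
    by (intro tendsto_intros r)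
  then have "X \<longlonglongrightarrow> (\<Sum>b\<in>BB. r b *\<^sub>R b)" using eq by simp
  then show ?thesis by (auto simp: convergent_def)
qed

lemma fin_dense:
  assumes "\<exists>B::'a::real_normed_vector set. finite B \<and> span B = UNIV"
  obtains D :: "'a::real_normed_vector set" where "countable D" "\<And>y e. e > 0 \<Longrightarrow> \<exists>d\<in>D. norm (y - d) < e"
proof -
  obtain B :: "'a set" where B: "finite B" "span B = UNIV" using assms by blast
  define D where "D = (\<lambda>q. \<Sum>b\<in>B. q b *\<^sub>R b) ` (B \<rightarrow>\<^sub>E \<rat>)"
  have "countable D" unfolding D_def
    using B(1) countable_rat by (intro countable_image countable_PiE) auto
  moreover have "\<exists>d\<in>D. norm (y - d) < e" if e: "e > 0" for y e
  proof -
    have "y \<in> range (\<lambda>u. \<Sum>b\<in>B. u b *\<^sub>R b)"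
      using span_finite[OF B(1)] B(2) by simp
    then obtain u where u: "y = (\<Sum>b\<in>B. u b *\<^sub>R b)" by blast
    define \<eta> where "\<eta> = e / (real (card B) + 1)"
    have \<eta>0: "\<eta> > 0" unfolding \<eta>_def using e by simp
    have "\<forall>b. \<exists>q\<in>\<rat>. \<bar>u b - q\<bar> < \<eta> / (norm b + 1)"
    proof
      fix b :: 'a
      have "norm b + 1 > 0" by (smt (verit) norm_ge_zero)
      then have p: "\<eta> / (norm b + 1) > 0" using \<eta>0 by (rule divide_pos_pos[rotated])
      obtain q where "q \<in> \<rat>" "u b - \<eta> / (norm b + 1) < q" "q < u b"
        using Rats_dense_in_real[of "u b - \<eta> / (norm b + 1)" "u b"] p by auto
      then show "\<exists>q\<in>\<rat>. \<bar>u b - q\<bar> < \<eta> / (norm b + 1)" by (intro bexI[of _ q]) auto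
    qed
    then obtain q where q: "\<And>b. q b \<in> \<rat>" "\<And>b. \<bar>u b - q b\<bar> < \<eta> / (norm b + 1)" by metis
    define d where "d = (\<Sum>b\<in>B. restrict q B b *\<^sub>R b)"
    have "d \<in> D" unfolding D_def d_def using q(1) by (intro imageI) auto
    have dd: "d = (\<Sum>b\<in>B. q b *\<^sub>R b)" unfolding d_def by (intro sum.cong) auto
    have "y - d = (\<Sum>b\<in>B. (u b - q b) *\<^sub>R b)"
      unfolding u dd by (simp add: sum_subtractf scaleR_diff_left)
    then have "norm (y - d) \<le> (\<Sum>b\<in>B. norm ((u b - q b) *\<^sub>R b))"
      by (simp only: norm_sum)
    also have "\<dots> = (\<Sum>b\<in>B. \<bar>u b - q b\<bar> * norm b)" by simp
    also have "\<dots> \<le> (\<Sum>b\<in>B. \<eta>)"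
    proof (intro sum_mono)
      fix b assume "b \<in> B"
      have "\<bar>u b - q b\<bar> * norm b \<le> \<eta> / (norm b + 1) * norm b"
        using q(2)[of b] by (intro mult_right_mono) auto
      also have "\<dots> \<le> \<eta>"
      proof -
        have "norm b + 1 > 0" by (smt (verit) norm_ge_zero)
        then have "\<eta> / (norm b + 1) * norm b \<le> \<eta> / (norm b + 1) * (norm b + 1)"
          using \<eta>0 by (intro mult_left_mono) auto
        also have "\<dots> = \<eta>" using \<open>norm b + 1 > 0\<close> by simp
        finally show ?thesis .
      qed
      finally show "\<bar>u b - q b\<bar> * norm b \<le> \<eta>" .
    qed
    also have "\<dots> = real (card B) * \<eta>" by simp
    also have "\<dots> < e" unfolding \<eta>_def using e by (simp add: field_simps)
    finally show ?thesis using \<open>d \<in> D\<close> by blast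
  qed
  ultimately show ?thesis using that by blast
qed


lemma fin_dense_blinfun:
  assumes finX: "\<exists>B::'a::real_normed_vector set. finite B \<and> span B = UNIV"
    and finY: "\<exists>B::'b::real_normed_vector set. finite B \<and> span B = UNIV"
  obtains C :: "('a::real_normed_vector \<Rightarrow>\<^sub>L 'b::real_normed_vector) set"
    where "countable C" "\<And>L e. e > 0 \<Longrightarrow> \<exists>c\<in>C. norm (L - c) < e"
proof -
  obtain BX :: "'a set" where BX: "finite BX" "independent BX" "span BX = UNIV"
    using fin_indep_basis[OF finX] by blast
  obtain DY :: "'b set" where DY: "countable DY" "\<And>y e. e > 0 \<Longrightarrow> \<exists>d\<in>DY. norm (y - d) < e"
    using fin_dense[OF finY] by blast
  define F where "F g = (\<lambda>h. \<Sum>b\<in>BX. representation BX h b *\<^sub>R g b)" for g :: "'a \<Rightarrow> 'b"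
  have blF: "bounded_linear (F g)" for g
    unfolding F_def by (intro bounded_linear_sum bounded_linear_scaleR_const fin_coord_bounded[OF BX])
  have Fb: "F g b = g b" if "b \<in> BX" for g b
  proof -
    have "F g b = (\<Sum>ba\<in>BX. (if ba = b then 1 else 0) *\<^sub>R g ba)"
      unfolding F_def by (simp add: representation_basis[OF BX(2) that])
    also have "\<dots> = (\<Sum>ba\<in>BX. if ba = b then g ba else 0)" by (intro sum.cong) auto
    also have "\<dots> = g b" using BX(1) that by (simp add: sum.delta')
    finally show ?thesis .
  qed
  define C where "C = (\<lambda>g. Blinfun (F g)) ` (BX \<rightarrow>\<^sub>E DY)"
  have "countable C" unfolding C_def using BX(1) DY(1) by (intro countable_image countable_PiE) auto
  moreover have "\<exists>c\<in>C. norm (L - c) < e" if e: "e > 0" for L :: "'a \<Rightarrow>\<^sub>L 'b" and e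
  proof -
    obtain K where K0: "K \<ge> 0" and K: "\<forall>x. \<exists>c. x = (\<Sum>b\<in>BX. c b *\<^sub>R b) \<and> (\<forall>b\<in>BX. \<bar>c b\<bar> \<le> K * norm x)"
      using fin_dim_coeffs[OF BX(1)] BX(3) by auto
    define M where "M = K * real (card BX)"
    have M0: "M \<ge> 0" unfolding M_def using K0 by simp
    define \<eta> where "\<eta> = e / (2 * (M + 1))"
    have \<eta>0: "\<eta> > 0" unfolding \<eta>_def using e M0 by simp
    have "\<forall>b. \<exists>d\<in>DY. norm (blinfun_apply L b - d) < \<eta>" using DY(2) \<eta>0 by blast
    then obtain g where g: "\<And>b. g b \<in> DY" "\<And>b. norm (blinfun_apply L b - g b) < \<eta>" by metis
    define c where "c = Blinfun (F (restrict g BX))"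
    have "c \<in> C" unfolding c_def C_def using g(1) by (intro imageI) auto
    have capp: "blinfun_apply c = F (restrict g BX)" unfolding c_def using blF by (rule bounded_linear_Blinfun_apply)
    have cb: "blinfun_apply c b = g b" if "b \<in> BX" for b
      using capp Fb[OF that] that by simp
    have "norm (blinfun_apply (L - c) h) \<le> (M * \<eta>) * norm h" for h
    proof -
      obtain a where a: "h = (\<Sum>b\<in>BX. a b *\<^sub>R b)" "\<forall>b\<in>BX. \<bar>a b\<bar> \<le> K * norm h" using K by blast
      have "blinfun_apply (L - c) h = (\<Sum>b\<in>BX. a b *\<^sub>R blinfun_apply L b) - (\<Sum>b\<in>BX. a b *\<^sub>R blinfun_apply c b)"
        unfolding a(1) by (simp add: blinfun.diff_left blinfun.sum_right blinfun.scaleR_right sum_subtractf scaleR_diff_right)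
      also have "\<dots> = (\<Sum>b\<in>BX. a b *\<^sub>R (blinfun_apply L b - g b))"
        using cb by (simp add: sum_subtractf[symmetric] scaleR_diff_right)
      finally have eq: "blinfun_apply (L - c) h = (\<Sum>b\<in>BX. a b *\<^sub>R (blinfun_apply L b - g b))" .
      have "norm (blinfun_apply (L - c) h) \<le> (\<Sum>b\<in>BX. norm (a b *\<^sub>R (blinfun_apply L b - g b)))"
        unfolding eq by (rule norm_sum)
      also have "\<dots> \<le> (\<Sum>b\<in>BX. (K * norm h) * \<eta>)"
      proof (intro sum_mono)
        fix b assume "b \<in> BX"
        have "norm (a b *\<^sub>R (blinfun_apply L b - g b)) = \<bar>a b\<bar> * norm (blinfun_apply L b - g b)" by simp
        also have "\<dots> \<le> (K * norm h) * \<eta>"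
          using a(2) \<open>b \<in> BX\<close> g(2)[of b] by (intro mult_mono) auto
        finally show "norm (a b *\<^sub>R (blinfun_apply L b - g b)) \<le> (K * norm h) * \<eta>" .
      qed
      also have "\<dots> = (M * \<eta>) * norm h" unfolding M_def by (simp add: algebra_simps)
      finally show ?thesis .
    qed
    then have "norm (L - c) \<le> M * \<eta>"
      using M0 \<eta>0 by (intro norm_blinfun_bound) auto
    also have "M * \<eta> < e"
    proof -
      have "M * \<eta> = e * (M / (2 * (M + 1)))" unfolding \<eta>_def by simp
      also have "M / (2 * (M + 1)) < 1" using M0 by (simp add: field_simps)
      then have "e * (M / (2 * (M + 1))) < e * 1" using e by (intro mult_strict_left_mono) auto
      finally show ?thesis by simp
    qed
    finally show ?thesis using \<open>c \<in> C\<close> by blast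
  qed
  ultimately show ?thesis using that by blast
qed


definition Aset :: "('a::real_normed_vector \<Rightarrow> 'b::real_normed_vector set) \<Rightarrow> ('a \<Rightarrow>\<^sub>L 'b) \<Rightarrow> real \<Rightarrow> nat \<Rightarrow> 'a set" where
  "Aset T c s k = {x. is_singleton (T x) \<and> (\<forall>y. norm (y - x) < 1 / real (Suc k) \<longrightarrow>
      (\<forall>w\<in>T y. norm (w - the_elem (T x) - blinfun_apply c (y - x)) \<le> s * norm (y - x)))}"

lemma norm3: "norm (a + b - c) \<le> norm a + norm b + norm (c::'a::real_normed_vector)"
proof -
  have "norm (a + b - c) \<le> norm (a + b) + norm c" by (rule norm_triangle_ineq4)
  moreover have "norm (a + b) \<le> norm a + norm b" by (rule norm_triangle_ineq)
  ultimately show ?thesis by linarith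
qed

lemma eps_le:
  fixes a s b :: real
  assumes "\<And>\<epsilon>. \<epsilon> > 0 \<Longrightarrow> a \<le> (s + \<epsilon>) * b" "b \<ge> 0"
  shows "a \<le> s * b"
proof (cases "b = 0")
  case True then show ?thesis using assms(1)[of 1] by simp
next
  case False
  then have b0: "b > 0" using assms(2) by simp
  show ?thesis
  proof (rule field_le_epsilon)
    fix e :: real assume "e > 0"
    then have "a \<le> (s + e / b) * b" using assms(1)[of "e / b"] b0 by simp
    also have "\<dots> = s * b + e" using b0 by (simp add: algebra_simps)
    finally show "a \<le> s * b + e" .
  qed
qed

lemma local_bound_global:
  fixes M :: "'a::real_normed_vector \<Rightarrow> 'b::real_normed_vector"
  assumes "linear M" "\<delta> > 0" "\<And>h. norm h < \<delta> \<Longrightarrow> norm (M h) \<le> s * norm h"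
  shows "norm (M h) \<le> s * norm h"
proof (cases "h = 0")
  case True then show ?thesis using linear_0[OF assms(1)] by simp
next
  case False
  define t where "t = \<delta> / (2 * norm h)"
  have t0: "t > 0" using False assms(2) by (simp add: t_def)
  have "norm (t *\<^sub>R h) = \<delta> / 2" using False assms(2) by (simp add: t_def)
  then have "norm (t *\<^sub>R h) < \<delta>" using assms(2) by simp
  from assms(3)[OF this] have "t * norm (M h) \<le> t * (s * norm h)"
    using t0 by (simp add: linear_scale[OF assms(1)])
  then show ?thesis using t0 by (rule mult_left_le_imp_le)
qed

lemma wc_single:
  assumes "weakly_continuous_at T x" "is_singleton (T x)" "e > 0"
  shows "\<exists>\<delta>>0. \<forall>y w. norm (y - x) < \<delta> \<longrightarrow> w \<in> T y \<longrightarrow> norm (w - the_elem (T x)) < e"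
proof -
  obtain \<delta> where \<delta>: "\<delta> > 0" "\<forall>y. norm (y - x) < \<delta> \<longrightarrow> T y \<subseteq> {a + v | a v. a \<in> T x \<and> norm v < e}"
    using assms(1,3) unfolding weakly_continuous_at_def by blast
  obtain z where z: "T x = {z}" using assms(2) unfolding is_singleton_def by blast
  show ?thesis
  proof (intro exI[of _ \<delta>] conjI allI impI)
    fix y w assume "norm (y - x) < \<delta>" "w \<in> T y"
    then obtain a v where "w = a + v" "a \<in> T x" "norm v < e" using \<delta>(2) by blast
    then show "norm (w - the_elem (T x)) < e" using z by simp
  qed (rule \<delta>(1))
qed

lemma singleton_set_borel:
  assumes ne: "\<And>u. T u \<noteq> {}" and wc: "\<And>x. weakly_continuous_at T x"
  shows "{x. is_singleton (T x)} \<in> sets borel"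
proof -
  define V where "V n = {x. \<exists>r < 1 / real (Suc n). \<forall>a\<in>T x. \<forall>b\<in>T x. norm (a - b) \<le> r}" for n
  have opn: "open (V n)" for n
    unfolding open_contains_ball
  proof
    fix x assume "x \<in> V n"
    then obtain r where r: "r < 1 / real (Suc n)" "\<forall>a\<in>T x. \<forall>b\<in>T x. norm (a - b) \<le> r"
      unfolding V_def by blast
    define e where "e = (1 / real (Suc n) - r) / 3"
    have e0: "e > 0" using r(1) by (simp add: e_def)
    obtain \<delta> where \<delta>: "\<delta> > 0" "\<forall>y. norm (y - x) < \<delta> \<longrightarrow> T y \<subseteq> {a + v | a v. a \<in> T x \<and> norm v < e}"
      using wc[of x] e0 unfolding weakly_continuous_at_def by blast
    have "ball x \<delta> \<subseteq> V n"
    proof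
      fix y assume "y \<in> ball x \<delta>"
      then have "norm (y - x) < \<delta>" by (simp add: dist_norm norm_minus_commute)
      then have sub: "T y \<subseteq> {a + v | a v. a \<in> T x \<and> norm v < e}" using \<delta> by blast
      have "\<forall>a'\<in>T y. \<forall>b'\<in>T y. norm (a' - b') \<le> r + 2 * e"
      proof (intro ballI)
        fix a' b' assume "a' \<in> T y" "b' \<in> T y"
        then obtain a v b w where abvw: "a' = a + v" "a \<in> T x" "norm v < e" "b' = b + w" "b \<in> T x" "norm w < e"
          using sub by blast
        have "a' - b' = (a - b) + (v - w)" using abvw by simp
        then have "norm (a' - b') \<le> norm (a - b) + norm (v - w)" by (simp only: norm_triangle_ineq)
        moreover have "norm (v - w) \<le> norm v + norm w" by (rule norm_triangle_ineq4)
        moreover have "norm (a - b) \<le> r" using r(2) abvw by blast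
        ultimately show "norm (a' - b') \<le> r + 2 * e" using abvw by linarith
      qed
      moreover have "r + 2 * e < 1 / real (Suc n)" using r(1) unfolding e_def by argo
      ultimately show "y \<in> V n" unfolding V_def by blast
    qed
    then show "\<exists>\<epsilon>>0. ball x \<epsilon> \<subseteq> V n" using \<delta>(1) by blast
  qed
  have eq: "{x. is_singleton (T x)} = (\<Inter>n. V n)"
  proof
    show "{x. is_singleton (T x)} \<subseteq> (\<Inter>n. V n)"
    proof
      fix x assume "x \<in> {x. is_singleton (T x)}"
      then have "\<forall>a\<in>T x. \<forall>b\<in>T x. norm (a - b) \<le> 0"
        by (auto simp: is_singleton_def)
      then show "x \<in> (\<Inter>n. V n)" unfolding V_def
        by (auto intro!: exI[of _ 0])
    qed
    show "(\<Inter>n. V n) \<subseteq> {x. is_singleton (T x)}"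
    proof
      fix x assume x: "x \<in> (\<Inter>n. V n)"
      have "a = b" if "a \<in> T x" "b \<in> T x" for a b
      proof (rule ccontr)
        assume "a \<noteq> b"
        then have "norm (a - b) > 0" by simp
        then obtain n where n: "inverse (real (Suc n)) < norm (a - b)"
          using reals_Archimedean by blast
        from x have "x \<in> V n" by blast
        then obtain r where r: "r < 1 / real (Suc n)" "\<forall>a\<in>T x. \<forall>b\<in>T x. norm (a - b) \<le> r"
          unfolding V_def by blast
        have "norm (a - b) \<le> r" using r(2) that by simp
        then show False using r(1) using n by (simp add: inverse_eq_divide)
      qed
      then show "x \<in> {x. is_singleton (T x)}" using ne[of x] by (auto intro: is_singletonI')
    qed
  qed
  have "(\<Inter>n. V n) \<in> sets borel"
    by (rule sets.countable_INT) (auto intro: borel_open opn)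
  then show ?thesis using eq by simp
qed


lemma Aset_borel:
  assumes wc: "\<And>x. weakly_continuous_at T x"
    and sb: "{x. is_singleton (T x)} \<in> sets borel" and s0: "s \<ge> 0"
  shows "Aset T c s k \<in> sets borel"
proof -
  let ?S = "{x. is_singleton (T x)}"
  let ?f = "\<lambda>z. the_elem (T z)"
  have eqA: "Aset T c s k = ?S \<inter> closure (Aset T c s k)"
  proof
    have "Aset T c s k \<subseteq> ?S" by (auto simp: Aset_def)
    then show "Aset T c s k \<subseteq> ?S \<inter> closure (Aset T c s k)"
      using closure_subset[of "Aset T c s k"] by blast
    show "?S \<inter> closure (Aset T c s k) \<subseteq> Aset T c s k"
    proof
      fix x assume x: "x \<in> ?S \<inter> closure (Aset T c s k)"
      have xs: "is_singleton (T x)" using x by simp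
      have "norm (w - ?f x - blinfun_apply c (y - x)) \<le> s * norm (y - x)"
        if y: "norm (y - x) < 1 / real (Suc k)" and w: "w \<in> T y" for y w
      proof (rule ccontr)
        assume neg: "\<not> ?thesis"
        define g where "g = norm (w - ?f x - blinfun_apply c (y - x)) - s * norm (y - x)"
        have g0: "g > 0" using neg by (simp add: g_def)
        define \<eta> where "\<eta> = min ((1 / real (Suc k) - norm (y - x)) / 2) (g / (2 * (1 + s + norm c)))"
        have pos: "1 + s + norm c > 0" using s0 by (simp add: add_pos_nonneg)
        have \<eta>0: "\<eta> > 0" unfolding \<eta>_def using y g0 pos by simp
        have \<eta>1: "norm (y - x) + \<eta> < 1 / real (Suc k)" unfolding \<eta>_def using y by argo
        have \<eta>2: "\<eta> * (1 + s + norm c) \<le> g / 2"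
        proof -
          have "\<eta> \<le> g / (2 * (1 + s + norm c))" unfolding \<eta>_def by simp
          then have "\<eta> * (1 + s + norm c) \<le> g / (2 * (1 + s + norm c)) * (1 + s + norm c)"
            using pos by (intro mult_right_mono) auto
          also have "\<dots> = g / 2" using pos by (simp add: field_simps)
          finally show ?thesis .
        qed
        obtain \<delta> where \<delta>: "\<delta> > 0" "\<forall>y w. norm (y - x) < \<delta> \<longrightarrow> w \<in> T y \<longrightarrow> norm (w - ?f x) < \<eta>"
          using wc_single[OF wc xs \<eta>0] by blast
        have mpos: "min \<delta> \<eta> > 0" using \<delta>(1) \<eta>0 by simp
        have xc: "x \<in> closure (Aset T c s k)" using x by blast
        obtain x' where x': "x' \<in> Aset T c s k" "dist x' x < min \<delta> \<eta>"
          using xc mpos unfolding closure_approachable by blast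
        have nx: "norm (x' - x) < \<delta>" "norm (x' - x) < \<eta>" using x'(2) by (simp_all add: dist_norm)
        have x's: "is_singleton (T x')" using x'(1) by (simp add: Aset_def)
        then obtain z where z: "T x' = {z}" unfolding is_singleton_def by blast
        then have "?f x' \<in> T x'" by simp
        then have fx: "norm (?f x' - ?f x) < \<eta>" using \<delta>(2) nx(1) by blast
        have yx': "y - x' = (y - x) - (x' - x)" by simp
        have "norm (y - x') \<le> norm (y - x) + norm (x' - x)"
          by (simp only: yx' norm_triangle_ineq4)
        then have nyx': "norm (y - x') \<le> norm (y - x) + \<eta>" using nx(2) by linarith
        then have "norm (y - x') < 1 / real (Suc k)" using \<eta>1 by linarith
        then have Ax': "norm (w - ?f x' - blinfun_apply c (y - x')) \<le> s * norm (y - x')"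
          using x'(1) w unfolding Aset_def by blast
        have ident: "w - ?f x - blinfun_apply c (y - x) =
            (w - ?f x' - blinfun_apply c (y - x')) + (?f x' - ?f x) - blinfun_apply c (x' - x)"
          by (simp add: blinfun.diff_right algebra_simps)
        have "norm (w - ?f x - blinfun_apply c (y - x)) \<le>
            norm (w - ?f x' - blinfun_apply c (y - x')) + norm (?f x' - ?f x) + norm (blinfun_apply c (x' - x))"
          unfolding ident by (rule norm3)
        also have "\<dots> \<le> s * (norm (y - x) + \<eta>) + \<eta> + norm c * \<eta>"
        proof -
          have "s * norm (y - x') \<le> s * (norm (y - x) + \<eta>)" using nyx' s0 by (rule mult_left_mono)
          moreover have "norm (blinfun_apply c (x' - x)) \<le> norm c * \<eta>"
            using norm_blinfun[of c "x' - x"] nx(2) mult_left_mono[of "norm (x' - x)" \<eta> "norm c"]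
            by simp
          ultimately show ?thesis using Ax' fx by linarith
        qed
        also have "\<dots> = s * norm (y - x) + \<eta> * (1 + s + norm c)" by (simp add: algebra_simps)
        also have "\<dots> < s * norm (y - x) + g" using \<eta>2 g0 by linarith
        finally show False unfolding g_def by simp
      qed
      then show "x \<in> Aset T c s k" using xs by (auto simp: Aset_def)
    qed
  qed
  have "closure (Aset T c s k) \<in> sets borel" by (rule borel_closed) simp
  then have bA: "?S \<inter> closure (Aset T c s k) \<in> sets borel" using sb by (intro sets.Int)
  show ?thesis by (subst eqA) (rule bA)
qed

lemma E1:
  assumes "strongly_diff_with T x L" "\<And>h. norm (L h - blinfun_apply c h) \<le> s * norm h" "\<epsilon> > 0"
  shows "\<exists>k. x \<in> Aset T c (s + \<epsilon>) k"
proof -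
  obtain \<delta> where \<delta>: "\<delta> > 0" "\<forall>y w. norm (x - y) \<le> \<delta> \<and> w \<in> T y \<longrightarrow> norm (w - the_elem (T x) - L (y - x)) \<le> \<epsilon> * norm (y - x)"
    using assms(1) assms(3) unfolding strongly_diff_with_def by blast
  obtain k where k: "inverse (real (Suc k)) < \<delta>" using reals_Archimedean \<delta>(1) by blast
  have "x \<in> Aset T c (s + \<epsilon>) k" unfolding Aset_def
  proof (intro CollectI conjI allI impI ballI)
    show "is_singleton (T x)" using assms(1) by (simp add: strongly_diff_with_def)
    fix y w assume y: "norm (y - x) < 1 / real (Suc k)" and w: "w \<in> T y"
    have "norm (x - y) \<le> \<delta>" using y k by (simp add: norm_minus_commute inverse_eq_divide)
    then have 1: "norm (w - the_elem (T x) - L (y - x)) \<le> \<epsilon> * norm (y - x)" using \<delta> w by blast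
    have "w - the_elem (T x) - blinfun_apply c (y - x) = (w - the_elem (T x) - L (y - x)) + (L (y - x) - blinfun_apply c (y - x))"
      by simp
    then have "norm (w - the_elem (T x) - blinfun_apply c (y - x)) \<le> norm (w - the_elem (T x) - L (y - x)) + norm (L (y - x) - blinfun_apply c (y - x))"
      by (simp only: norm_triangle_ineq)
    also have "\<dots> \<le> \<epsilon> * norm (y - x) + s * norm (y - x)" using 1 assms(2)[of "y - x"] by linarith
    finally show "norm (w - the_elem (T x) - blinfun_apply c (y - x)) \<le> (s + \<epsilon>) * norm (y - x)"
      by (simp add: algebra_simps)
  qed
  then show ?thesis by blast
qed

lemma linear_blinfun_diff: "linear L \<Longrightarrow> linear (\<lambda>h. L h - blinfun_apply c h)"
  by (intro linear_compose_sub bounded_linear.linear[OF blinfun.bounded_linear_right])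

lemma E3:
  fixes T :: "'a::real_normed_vector \<Rightarrow> 'b::real_normed_vector set"
  assumes ne: "\<And>u. T u \<noteq> {}" and A1: "x \<in> Aset T c1 s1 k1" and A2: "x \<in> Aset T c2 s2 k2"
  shows "norm (blinfun_apply c1 h - blinfun_apply c2 h) \<le> (s1 + s2) * norm h"
proof (rule local_bound_global[where M = "\<lambda>h. blinfun_apply c1 h - blinfun_apply c2 h" and \<delta> = "min (1 / real (Suc k1)) (1 / real (Suc k2))"])
  show "linear (\<lambda>h. blinfun_apply c1 h - blinfun_apply c2 h)"
    by (intro linear_blinfun_diff bounded_linear.linear[OF blinfun.bounded_linear_right])
  show "0 < min (1 / real (Suc k1)) (1 / real (Suc k2))" by simp
  fix h :: 'a assume h: "norm h < min (1 / real (Suc k1)) (1 / real (Suc k2))"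
  obtain w where w: "w \<in> T (x + h)" using ne by blast
  have "\<forall>y. norm (y - x) < 1 / real (Suc k1) \<longrightarrow> (\<forall>w\<in>T y. norm (w - the_elem (T x) - blinfun_apply c1 (y - x)) \<le> s1 * norm (y - x))"
    using A1 unfolding Aset_def by blast
  moreover have "norm ((x + h) - x) < 1 / real (Suc k1)" using h by simp
  ultimately have "\<forall>w\<in>T (x + h). norm (w - the_elem (T x) - blinfun_apply c1 ((x + h) - x)) \<le> s1 * norm ((x + h) - x)"
    by blast
  then have a1: "norm (w - the_elem (T x) - blinfun_apply c1 h) \<le> s1 * norm h"
    using w by simp
  have "\<forall>y. norm (y - x) < 1 / real (Suc k2) \<longrightarrow> (\<forall>w\<in>T y. norm (w - the_elem (T x) - blinfun_apply c2 (y - x)) \<le> s2 * norm (y - x))"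
    using A2 unfolding Aset_def by blast
  moreover have "norm ((x + h) - x) < 1 / real (Suc k2)" using h by simp
  ultimately have "\<forall>w\<in>T (x + h). norm (w - the_elem (T x) - blinfun_apply c2 ((x + h) - x)) \<le> s2 * norm ((x + h) - x)"
    by blast
  then have a2: "norm (w - the_elem (T x) - blinfun_apply c2 h) \<le> s2 * norm h"
    using w by simp
  have "blinfun_apply c1 h - blinfun_apply c2 h = (w - the_elem (T x) - blinfun_apply c2 h) - (w - the_elem (T x) - blinfun_apply c1 h)"
    by simp
  then have "norm (blinfun_apply c1 h - blinfun_apply c2 h) \<le> norm (w - the_elem (T x) - blinfun_apply c2 h) + norm (w - the_elem (T x) - blinfun_apply c1 h)"
    by (simp only: norm_triangle_ineq4)
  then show "norm (blinfun_apply c1 h - blinfun_apply c2 h) \<le> (s1 + s2) * norm h"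
    using a1 a2 by (simp add: algebra_simps)
qed

lemma E2:
  fixes T :: "'a::real_normed_vector \<Rightarrow> 'b::real_normed_vector set"
  assumes ne: "\<And>u. T u \<noteq> {}" and sd: "strongly_diff_with T x L" and A: "x \<in> Aset T c s k"
  shows "norm (L h - blinfun_apply c h) \<le> s * norm h"
proof (rule eps_le)
  show "norm h \<ge> 0" by simp
  fix \<epsilon> :: real assume e: "\<epsilon> > 0"
  obtain \<delta> where \<delta>: "\<delta> > 0" "\<forall>y w. norm (x - y) \<le> \<delta> \<and> w \<in> T y \<longrightarrow> norm (w - the_elem (T x) - L (y - x)) \<le> \<epsilon> * norm (y - x)"
    using sd e unfolding strongly_diff_with_def by blast
  have lin: "linear L" using sd by (simp add: strongly_diff_with_def)
  show "norm (L h - blinfun_apply c h) \<le> (s + \<epsilon>) * norm h"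
  proof (rule local_bound_global[where M = "\<lambda>h. L h - blinfun_apply c h" and \<delta> = "min \<delta> (1 / real (Suc k))"])
    show "linear (\<lambda>h. L h - blinfun_apply c h)" using lin by (rule linear_blinfun_diff)
    show "0 < min \<delta> (1 / real (Suc k))" using \<delta>(1) by simp
    fix h :: 'a assume h: "norm h < min \<delta> (1 / real (Suc k))"
    obtain w where w: "w \<in> T (x + h)" using ne by blast
    have "\<forall>y. norm (y - x) < 1 / real (Suc k) \<longrightarrow> (\<forall>w\<in>T y. norm (w - the_elem (T x) - blinfun_apply c (y - x)) \<le> s * norm (y - x))"
      using A unfolding Aset_def by blast
    moreover have "norm ((x + h) - x) < 1 / real (Suc k)" using h by simp
    ultimately have "\<forall>w\<in>T (x + h). norm (w - the_elem (T x) - blinfun_apply c ((x + h) - x)) \<le> s * norm ((x + h) - x)"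
      by blast
    then have a1: "norm (w - the_elem (T x) - blinfun_apply c h) \<le> s * norm h"
      using w by simp
    have "norm (x - (x + h)) \<le> \<delta>" using h by simp
    then have a2: "norm (w - the_elem (T x) - L h) \<le> \<epsilon> * norm h"
      using \<delta>(2) w by fastforce
    have "L h - blinfun_apply c h = (w - the_elem (T x) - blinfun_apply c h) - (w - the_elem (T x) - L h)"
      by simp
    then have "norm (L h - blinfun_apply c h) \<le> norm (w - the_elem (T x) - blinfun_apply c h) + norm (w - the_elem (T x) - L h)"
      by (simp only: norm_triangle_ineq4)
    then show "norm (L h - blinfun_apply c h) \<le> (s + \<epsilon>) * norm h"
      using a1 a2 by (simp add: algebra_simps)
  qed
qed


lemma sd_unique:
  fixes T :: "'a::real_normed_vector \<Rightarrow> 'b::real_normed_vector set"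
  assumes finX: "\<exists>B::'a set. finite B \<and> span B = UNIV" and ne: "\<And>u. T u \<noteq> {}"
    and s1: "strongly_diff_with T x L1" and s2: "strongly_diff_with T x L2"
  shows "L1 = L2"
proof
  fix h :: 'a
  have "bounded_linear L2" using s2 finX fin_bounded_linear by (auto simp: strongly_diff_with_def)
  then have capp: "blinfun_apply (Blinfun L2) = L2" by (rule bounded_linear_Blinfun_apply)
  have "norm (L1 h - L2 h) \<le> 0 * norm h"
  proof (rule eps_le)
    fix \<epsilon> :: real assume e: "\<epsilon> > 0"
    have "\<exists>k. x \<in> Aset T (Blinfun L2) (0 + \<epsilon>) k"
      by (rule E1[OF s2 _ e]) (simp add: capp)
    then obtain k where "x \<in> Aset T (Blinfun L2) (0 + \<epsilon>) k" by blast
    from E2[OF ne s1 this] show "norm (L1 h - L2 h) \<le> (0 + \<epsilon>) * norm h" by (simp add: capp)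
  qed simp
  then show "L1 h = L2 h" by simp
qed

lemma D_apply:
  fixes T :: "'a::real_normed_vector \<Rightarrow> 'b::real_normed_vector set"
  assumes finX: "\<exists>B::'a set. finite B \<and> span B = UNIV" and ne: "\<And>u. T u \<noteq> {}"
    and x: "x \<in> dmn_D T"
  shows "strongly_diff_with T x (blinfun_apply (D T x))"
proof -
  obtain L where L: "strongly_diff_with T x L" using x unfolding dmn_D_def by blast
  have "bounded_linear L" using L finX fin_bounded_linear by (auto simp: strongly_diff_with_def)
  then have capp: "blinfun_apply (Blinfun L) = L" by (rule bounded_linear_Blinfun_apply)
  have ex1: "\<exists>!c. strongly_diff_with T x (blinfun_apply c)"
  proof (rule ex1I[of _ "Blinfun L"])
    show "strongly_diff_with T x (blinfun_apply (Blinfun L))" using L capp by simp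
    fix c assume "strongly_diff_with T x (blinfun_apply c)"
    then have "blinfun_apply c = L" using sd_unique[OF finX ne _ L] by blast
    then show "c = Blinfun L" using blinfun_apply_inverse[of c] by simp
  qed
  show ?thesis unfolding D_def by (rule theI'[OF ex1])
qed

lemma dmn_char:
  fixes T :: "'a::real_normed_vector \<Rightarrow> 'b::real_normed_vector set"
  assumes finX: "\<exists>B::'a set. finite B \<and> span B = UNIV"
    and finY: "\<exists>B::'b set. finite B \<and> span B = UNIV"
    and ne: "\<And>u. T u \<noteq> {}"
    and Cd: "\<And>L e. e > 0 \<Longrightarrow> \<exists>c\<in>C. norm (L - c) < (e::real)"
  shows "dmn_D T = {x. is_singleton (T x)} \<inter> (\<Inter>m. \<Union>c\<in>C. \<Union>k. Aset T c (inverse (real (Suc m))) k)"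
proof
  show "dmn_D T \<subseteq> {x. is_singleton (T x)} \<inter> (\<Inter>m. \<Union>c\<in>C. \<Union>k. Aset T c (inverse (real (Suc m))) k)"
  proof
    fix x assume x: "x \<in> dmn_D T"
    have sd: "strongly_diff_with T x (blinfun_apply (D T x))" by (rule D_apply[OF finX ne x])
    have "x \<in> (\<Union>c\<in>C. \<Union>k. Aset T c (inverse (real (Suc m))) k)" for m
    proof -
      define e where "e = inverse (real (Suc m)) / 2"
      have e0: "e > 0" unfolding e_def by simp
      obtain c where c: "c \<in> C" "norm (D T x - c) < e" using Cd[OF e0] by blast
      have "norm (blinfun_apply (D T x) h - blinfun_apply c h) \<le> e * norm h" for h
      proof -
        have "norm (blinfun_apply (D T x) h - blinfun_apply c h) = norm (blinfun_apply (D T x - c) h)"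
          by (simp add: blinfun.diff_left)
        also have "\<dots> \<le> norm (D T x - c) * norm h" by (rule norm_blinfun)
        also have "\<dots> \<le> e * norm h" using c(2) by (intro mult_right_mono) auto
        finally show ?thesis .
      qed
      from E1[OF sd this e0] obtain k where "x \<in> Aset T c (e + e) k" by blast
      moreover have "e + e = inverse (real (Suc m))" unfolding e_def by simp
      ultimately show ?thesis using c(1) by auto
    qed
    moreover have "is_singleton (T x)" using sd by (simp add: strongly_diff_with_def)
    ultimately show "x \<in> {x. is_singleton (T x)} \<inter> (\<Inter>m. \<Union>c\<in>C. \<Union>k. Aset T c (inverse (real (Suc m))) k)"
      by blast
  qed
  show "{x. is_singleton (T x)} \<inter> (\<Inter>m. \<Union>c\<in>C. \<Union>k. Aset T c (inverse (real (Suc m))) k) \<subseteq> dmn_D T"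
  proof
    fix x assume x: "x \<in> {x. is_singleton (T x)} \<inter> (\<Inter>m. \<Union>c\<in>C. \<Union>k. Aset T c (inverse (real (Suc m))) k)"
    then have "\<forall>m. \<exists>c k. c \<in> C \<and> x \<in> Aset T c (inverse (real (Suc m))) k" by blast
    then obtain cc kk where cc: "\<And>m. cc m \<in> C" "\<And>m. x \<in> Aset T (cc m) (inverse (real (Suc m))) (kk m)"
      by metis
    have xs: "is_singleton (T x)" using x by simp
    have diff: "norm (blinfun_apply (cc m) h - blinfun_apply (cc n) h) \<le> (inverse (real (Suc m)) + inverse (real (Suc n))) * norm h" for m n h
      using E3[OF ne cc(2)[of m] cc(2)[of n]] .
    have conv: "convergent (\<lambda>m. blinfun_apply (cc m) h)" for h
    proof (rule fin_Cauchy_convergent[OF finY], rule metric_CauchyI)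
      fix e :: real assume e: "e > 0"
      have hp: "norm h + 1 > 0" by (smt (verit) norm_ge_zero)
      have pos: "e / (2 * (norm h + 1)) > 0" using e hp by simp
      obtain N where N: "inverse (real (Suc N)) < e / (2 * (norm h + 1))"
        using reals_Archimedean[OF pos] by blast
      show "\<exists>M. \<forall>m\<ge>M. \<forall>n\<ge>M. dist (blinfun_apply (cc m) h) (blinfun_apply (cc n) h) < e"
      proof (intro exI allI impI)
        fix m n assume mn: "N \<le> m" "N \<le> n"
        have im: "inverse (real (Suc m)) \<le> inverse (real (Suc N))" using mn(1) by (simp add: le_imp_inverse_le)
        have inn: "inverse (real (Suc n)) \<le> inverse (real (Suc N))" using mn(2) by (simp add: le_imp_inverse_le)
        have "dist (blinfun_apply (cc m) h) (blinfun_apply (cc n) h) \<le> (inverse (real (Suc m)) + inverse (real (Suc n))) * norm h"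
          using diff by (simp add: dist_norm)
        also have "\<dots> \<le> (2 * inverse (real (Suc N))) * norm h"
          using im inn by (intro mult_right_mono) (linarith, simp)
        also have "\<dots> \<le> (2 * inverse (real (Suc N))) * (norm h + 1)"
          by (intro mult_left_mono) auto
        also have "\<dots> < (2 * (e / (2 * (norm h + 1)))) * (norm h + 1)"
          using N by (intro mult_strict_right_mono) (auto simp: add_nonneg_pos)
        also have "\<dots> = e"
        proof -
          have p: "norm h + 1 \<noteq> 0" by (smt (verit) norm_ge_zero)
          have gen: "\<And>P::real. P \<noteq> 0 \<Longrightarrow> 2 * (e / (2 * P)) * P = e" by (simp add: field_simps)
          show ?thesis using gen[OF p] .
        qed
        finally show "dist (blinfun_apply (cc m) h) (blinfun_apply (cc n) h) < e" .
      qed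
    qed
    define L where "L h = lim (\<lambda>m. blinfun_apply (cc m) h)" for h
    have Lt: "(\<lambda>m. blinfun_apply (cc m) h) \<longlonglongrightarrow> L h" for h
      unfolding L_def using conv convergent_LIMSEQ_iff by blast
    have lin: "linear L"
    proof (rule linearI)
      fix a b
      have "(\<lambda>m. blinfun_apply (cc m) (a + b)) \<longlonglongrightarrow> L a + L b"
        using tendsto_add[OF Lt[of a] Lt[of b]] by (simp add: blinfun.add_right)
      then show "L (a + b) = L a + L b" using Lt[of "a + b"] LIMSEQ_unique by blast
    next
      fix r b
      have "(\<lambda>m. blinfun_apply (cc m) (r *\<^sub>R b)) \<longlonglongrightarrow> r *\<^sub>R L b"
        using tendsto_scaleR[OF tendsto_const Lt[of b]] by (simp add: blinfun.scaleR_right)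
      then show "L (r *\<^sub>R b) = r *\<^sub>R L b" using Lt[of "r *\<^sub>R b"] LIMSEQ_unique by blast
    qed
    have bnd: "norm (L h - blinfun_apply (cc m) h) \<le> inverse (real (Suc m)) * norm h" for m h
    proof (rule LIMSEQ_le)
      show "(\<lambda>n. norm (blinfun_apply (cc n) h - blinfun_apply (cc m) h)) \<longlonglongrightarrow> norm (L h - blinfun_apply (cc m) h)"
        by (intro tendsto_intros Lt)
      have "(\<lambda>n. (inverse (real (Suc m)) + inverse (real (Suc n))) * norm h) \<longlonglongrightarrow> (inverse (real (Suc m)) + 0) * norm h"
        by (intro tendsto_intros LIMSEQ_inverse_real_of_nat)
      then show "(\<lambda>n. (inverse (real (Suc m)) + inverse (real (Suc n))) * norm h) \<longlonglongrightarrow> inverse (real (Suc m)) * norm h"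
        by simp
      show "\<exists>N. \<forall>n\<ge>N. norm (blinfun_apply (cc n) h - blinfun_apply (cc m) h) \<le> (inverse (real (Suc m)) + inverse (real (Suc n))) * norm h"
      proof (intro exI allI impI)
        fix n
        have "norm (blinfun_apply (cc n) h - blinfun_apply (cc m) h) \<le> (inverse (real (Suc n)) + inverse (real (Suc m))) * norm h"
          by (rule diff)
        also have "(inverse (real (Suc n)) + inverse (real (Suc m))) = (inverse (real (Suc m)) + inverse (real (Suc n)))"
          by (rule add.commute)
        finally show "norm (blinfun_apply (cc n) h - blinfun_apply (cc m) h) \<le> (inverse (real (Suc m)) + inverse (real (Suc n))) * norm h" .
      qed
    qed
    have "strongly_diff_with T x L"
      unfolding strongly_diff_with_def
    proof (intro conjI allI impI xs lin)
      fix \<epsilon> :: real assume e: "\<epsilon> > 0"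
      have e2: "\<epsilon> / 2 > 0" using e by simp
      obtain m where m: "inverse (real (Suc m)) < \<epsilon> / 2" using reals_Archimedean[OF e2] by blast
      define \<delta> where "\<delta> = (1 / real (Suc (kk m))) / 2"
      have \<delta>0: "\<delta> > 0" unfolding \<delta>_def by simp
      have A: "\<forall>y. norm (y - x) < 1 / real (Suc (kk m)) \<longrightarrow> (\<forall>w\<in>T y. norm (w - the_elem (T x) - blinfun_apply (cc m) (y - x)) \<le> inverse (real (Suc m)) * norm (y - x))"
        using cc(2)[of m] unfolding Aset_def by blast
      show "\<exists>\<delta>>0. \<forall>y w. norm (x - y) \<le> \<delta> \<and> w \<in> T y \<longrightarrow> norm (w - the_elem (T x) - L (y - x)) \<le> \<epsilon> * norm (y - x)"
      proof (intro exI[of _ \<delta>] conjI allI impI \<delta>0, elim conjE)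
        fix y w assume y: "norm (x - y) \<le> \<delta>" and w: "w \<in> T y"
        have pos: "1 / real (Suc (kk m)) > 0" by simp
        have "norm (y - x) < 1 / real (Suc (kk m))" 
        proof -
          have gen: "\<And>a b::real. a \<le> b / 2 \<Longrightarrow> 0 < b \<Longrightarrow> a < b" by linarith
          show ?thesis using gen[OF y[unfolded \<delta>_def] pos] by (simp add: norm_minus_commute)
        qed
        then have a: "norm (w - the_elem (T x) - blinfun_apply (cc m) (y - x)) \<le> inverse (real (Suc m)) * norm (y - x)"
          using A w by blast
        have "w - the_elem (T x) - L (y - x) = (w - the_elem (T x) - blinfun_apply (cc m) (y - x)) - (L (y - x) - blinfun_apply (cc m) (y - x))"
          by simp
        then have "norm (w - the_elem (T x) - L (y - x)) \<le> norm (w - the_elem (T x) - blinfun_apply (cc m) (y - x)) + norm (L (y - x) - blinfun_apply (cc m) (y - x))"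
          by (simp only: norm_triangle_ineq4)
        also have "\<dots> \<le> (2 * inverse (real (Suc m))) * norm (y - x)" using a bnd[where m=m and h="y - x"] by simp
        also have "\<dots> \<le> \<epsilon> * norm (y - x)" using m by (intro mult_right_mono) auto
        finally show "norm (w - the_elem (T x) - L (y - x)) \<le> \<epsilon> * norm (y - x)" .
      qed
    qed
    then show "x \<in> dmn_D T" unfolding dmn_D_def by blast
  qed
qed


theorem lemma2p1:
  fixes T :: "'a::real_normed_vector \<Rightarrow> 'b::real_normed_vector set"
  assumes finX: "\<exists>B::'a set. finite B \<and> span B = UNIV"
    and finY: "\<exists>B::'b set. finite B \<and> span B = UNIV"
    and nonempty: "\<And>u. T u \<noteq> {}"
    and wc: "\<And>x. weakly_continuous_at T x"
  shows "{x. is_singleton (T x)} \<in> sets borel \<and>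
         dmn_D T \<in> sets borel \<and>
         D T \<in> borel_measurable (restrict_space borel (dmn_D T))"
proof -
  have sb: "{x. is_singleton (T x)} \<in> sets borel" by (rule singleton_set_borel[OF nonempty wc])
  obtain C :: "('a \<Rightarrow>\<^sub>L 'b) set" where C: "countable C" "\<And>L e. e > 0 \<Longrightarrow> \<exists>c\<in>C. norm (L - c) < e"
    using fin_dense_blinfun[OF finX finY] by blast
  have Ab: "Aset T c s k \<in> sets borel" if "s \<ge> 0" for c s k using Aset_borel[OF wc sb that] .
  have db: "dmn_D T \<in> sets borel"
  proof -
    have 1: "(\<Union>k. Aset T c (inverse (real (Suc m))) k) \<in> sets borel" for m c
      by (rule sets.countable_UN) (auto intro: Ab)
    have 2: "(\<Union>c\<in>C. \<Union>k. Aset T c (inverse (real (Suc m))) k) \<in> sets borel" for m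
      by (rule sets.countable_UN'[OF C(1)]) (use 1 in auto)
    have 3: "(\<Inter>m. \<Union>c\<in>C. \<Union>k. Aset T c (inverse (real (Suc m))) k) \<in> sets borel"
      by (rule sets.countable_INT) (use 2 in auto)
    have eqD: "dmn_D T = {x. is_singleton (T x)} \<inter> (\<Inter>m. \<Union>c\<in>C. \<Union>k. Aset T c (inverse (real (Suc m))) k)"
      by (rule dmn_char[OF finX finY nonempty C(2)])
    show ?thesis by (subst eqD) (rule sets.Int[OF sb 3])
  qed
  define G where "G c s = dmn_D T \<inter> (\<Inter>m. \<Union>k. Aset T c (s + inverse (real (Suc m))) k)" for c s
  have Gb: "G c s \<in> sets borel" if s0: "s \<ge> 0" for c s
  proof -
    have 1: "(\<Union>k. Aset T c (s + inverse (real (Suc m))) k) \<in> sets borel" for m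
    proof -
      have nn: "s + inverse (real (Suc m)) \<ge> 0" using s0 by simp
      show ?thesis by (rule sets.countable_UN) (use Ab[OF nn] in auto)
    qed
    have 2: "(\<Inter>m. \<Union>k. Aset T c (s + inverse (real (Suc m))) k) \<in> sets borel"
      by (rule sets.countable_INT) (use 1 in auto)
    show ?thesis unfolding G_def using db 2 by (rule sets.Int)
  qed
  have Gchar: "G c s = {x \<in> dmn_D T. norm (D T x - c) \<le> s}" if s0: "s \<ge> 0" for c s
  proof
    show "G c s \<subseteq> {x \<in> dmn_D T. norm (D T x - c) \<le> s}"
    proof
      fix x assume x: "x \<in> G c s"
      then have xd: "x \<in> dmn_D T" unfolding G_def by blast
      have sd: "strongly_diff_with T x (blinfun_apply (D T x))" by (rule D_apply[OF finX nonempty xd])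
      have "norm (blinfun_apply (D T x - c) h) \<le> s * norm h" for h
      proof (rule eps_le)
        fix \<epsilon> :: real assume e: "\<epsilon> > 0"
        obtain m where m: "inverse (real (Suc m)) < \<epsilon>" using reals_Archimedean e by blast
        obtain k where "x \<in> Aset T c (s + inverse (real (Suc m))) k" using x unfolding G_def by blast
        from E2[OF nonempty sd this, of h]
        have "norm (blinfun_apply (D T x) h - blinfun_apply c h) \<le> (s + inverse (real (Suc m))) * norm h" .
        also have "\<dots> \<le> (s + \<epsilon>) * norm h" using m by (intro mult_right_mono) auto
        finally show "norm (blinfun_apply (D T x - c) h) \<le> (s + \<epsilon>) * norm h"
          by (simp add: blinfun.diff_left)
      qed simp
      then have "norm (D T x - c) \<le> s" using s0 by (intro norm_blinfun_bound) auto
      then show "x \<in> {x \<in> dmn_D T. norm (D T x - c) \<le> s}" using xd by blast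
    qed
    show "{x \<in> dmn_D T. norm (D T x - c) \<le> s} \<subseteq> G c s"
    proof
      fix x assume x: "x \<in> {x \<in> dmn_D T. norm (D T x - c) \<le> s}"
      then have xd: "x \<in> dmn_D T" and nb: "norm (D T x - c) \<le> s" by auto
      have sd: "strongly_diff_with T x (blinfun_apply (D T x))" by (rule D_apply[OF finX nonempty xd])
      have hb: "norm (blinfun_apply (D T x) h - blinfun_apply c h) \<le> s * norm h" for h
      proof -
        have "norm (blinfun_apply (D T x) h - blinfun_apply c h) = norm (blinfun_apply (D T x - c) h)"
          by (simp add: blinfun.diff_left)
        also have "\<dots> \<le> norm (D T x - c) * norm h" by (rule norm_blinfun)
        also have "\<dots> \<le> s * norm h" using nb by (intro mult_right_mono) auto
        finally show ?thesis .
      qed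
      have "\<exists>k. x \<in> Aset T c (s + inverse (real (Suc m))) k" for m
        by (rule E1[OF sd hb]) simp
      then show "x \<in> G c s" unfolding G_def using xd by blast
    qed
  qed
  have meas: "D T \<in> borel_measurable (restrict_space borel (dmn_D T))"
  proof (rule borel_measurableI)
    fix U :: "('a \<Rightarrow>\<^sub>L 'b) set" assume U: "open U"
    have sp: "space (restrict_space borel (dmn_D T)) = dmn_D T" by (simp add: space_restrict_space)
    have eq: "D T -` U \<inter> dmn_D T = (\<Union>c\<in>C. \<Union>q\<in>\<rat>. if q > 0 \<and> cball c q \<subseteq> U then G c q else {})"
    proof
      show "D T -` U \<inter> dmn_D T \<subseteq> (\<Union>c\<in>C. \<Union>q\<in>\<rat>. if q > 0 \<and> cball c q \<subseteq> U then G c q else {})"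
      proof
        fix x assume x: "x \<in> D T -` U \<inter> dmn_D T"
        then have xU: "D T x \<in> U" and xd: "x \<in> dmn_D T" by auto
        obtain e where e: "e > 0" "ball (D T x) e \<subseteq> U" using U xU open_contains_ball by blast
        obtain q where q: "q \<in> \<rat>" "0 < q" "q < e / 2" using Rats_dense_in_real[of 0 "e / 2"] e(1) by auto
        obtain c where c: "c \<in> C" "norm (D T x - c) < q" using C(2)[OF q(2)] by blast
        have "cball c q \<subseteq> U"
        proof
          fix z assume "z \<in> cball c q"
          then have "dist c z \<le> q" by simp
          moreover have "dist (D T x) c < q" using c(2) by (simp add: dist_norm)
          moreover have "dist (D T x) z \<le> dist (D T x) c + dist c z" by (rule dist_triangle)
          ultimately have "dist (D T x) z < e" using q(3) by linarith
          then show "z \<in> U" using e(2) by auto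
        qed
        moreover have "x \<in> G c q" using Gchar[of q c] q(2) xd c(2) by simp
        ultimately show "x \<in> (\<Union>c\<in>C. \<Union>q\<in>\<rat>. if q > 0 \<and> cball c q \<subseteq> U then G c q else {})"
          using c(1) q(1,2) by (intro UN_I[OF c(1)] UN_I[OF q(1)]) simp
      qed
      show "(\<Union>c\<in>C. \<Union>q\<in>\<rat>. if q > 0 \<and> cball c q \<subseteq> U then G c q else {}) \<subseteq> D T -` U \<inter> dmn_D T"
      proof
        fix x assume "x \<in> (\<Union>c\<in>C. \<Union>q\<in>\<rat>. if q > 0 \<and> cball c q \<subseteq> U then G c q else {})"
        then obtain c q where cq: "q > 0" "cball c q \<subseteq> U" "x \<in> G c q"
          by (auto split: if_splits)
        then have "x \<in> dmn_D T" "norm (D T x - c) \<le> q" using Gchar[of q c] by auto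
        moreover have "D T x \<in> cball c q" using \<open>norm (D T x - c) \<le> q\<close>
          by (simp add: dist_norm norm_minus_commute)
        ultimately show "x \<in> D T -` U \<inter> dmn_D T" using cq(2) by auto
      qed
    qed
    have "(\<Union>c\<in>C. \<Union>q\<in>\<rat>. if q > 0 \<and> cball c q \<subseteq> U then G c q else {}) \<in> sets borel"
    proof (rule sets.countable_UN'[OF C(1)])
      have "(\<Union>q\<in>\<rat>. if q > 0 \<and> cball c q \<subseteq> U then G c q else {}) \<in> sets borel" for c
        by (rule sets.countable_UN'[OF countable_rat]) (auto intro: Gb)
      then show "(\<lambda>c. \<Union>q\<in>\<rat>. if q > 0 \<and> cball c q \<subseteq> U then G c q else {}) ` C \<subseteq> sets borel" by auto
    qed
    then have "D T -` U \<inter> dmn_D T \<in> sets borel" using eq by simp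
    then show "D T -` U \<inter> space (restrict_space borel (dmn_D T)) \<in> sets (restrict_space borel (dmn_D T))"
      unfolding sp using db by (subst sets_restrict_space_iff) auto
  qed
  show ?thesis using sb db meas by blast
qed


end
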